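(* For every $\varepsilon>0$ there exists $n_0$ such that for all $n\ge n_0$ the following holds. Let $\mathcal F\subseteq 2^{[n]}$ be a family all of whose sets have size in $[n/2-n^{2/3},\,n/2+n^{2/3}]$. If for every $F\in\mathcal F$ we have (i) $\nabla^1_{\mathcal F}(F)\le\varepsilon n$ and (ii) $\nabla^j_{\mathcal F}(F)\le\varepsilon n^2$ for all $j\ge2$, then $|\mathcal F|\le(1+15\varepsilon)\binom{n}{\lfloor n/2\rfloor}$.
   Context: $\nabla^j_{\mathcal F}(F):=|\{G\in\mathcal F:\ F\subseteq G,\ |G|=|F|+j\}|$. *)

theory Defs
  imports Complex_Main
begin

definition nabla :: "nat \<Rightarrow> 'a set set \<Rightarrow> 'a set \<Rightarrow> nat" where
  "nabla j \<F> F = card {G \<in> \<F>. F \<subseteq> G \<and> card G = card F + j}"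

end

theory Submission
  imports Defs "HOL-Combinatorics.Multiset_Permutations"
begin

lemma split_perm:
  assumes fin: "finite U" and FU: "F \<subseteq> U"
  shows "card {xs \<in> permutations_of_set U. set (take (card F) xs) = F \<and> P (take (card F) xs) \<and> Q (drop (card F) xs)}
       = card {p \<in> permutations_of_set F. P p} * card {q \<in> permutations_of_set (U - F). Q q}"
proof -
  let ?k = "card F"
  have eq: "{xs \<in> permutations_of_set U. set (take ?k xs) = F \<and> P (take ?k xs) \<and> Q (drop ?k xs)}
      = (\<lambda>(p,q). p @ q) ` ({p \<in> permutations_of_set F. P p} \<times> {q \<in> permutations_of_set (U - F). Q q})"
  proof (intro equalityI subsetI)
    fix xs assume xs: "xs \<in> {xs \<in> permutations_of_set U. set (take ?k xs) = F \<and> P (take ?k xs) \<and> Q (drop ?k xs)}"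
    hence d: "distinct xs" "set xs = U" and t: "set (take ?k xs) = F" and pq: "P (take ?k xs)" "Q (drop ?k xs)"
      by (auto simp: permutations_of_set_def)
    have disj: "set (take ?k xs) \<inter> set (drop ?k xs) = {}"
      using set_take_disj_set_drop_if_distinct[OF d(1)] by auto
    have "set (take ?k xs) \<union> set (drop ?k xs) = U"
      using d(2) by (metis append_take_drop_id set_append)
    hence sd: "set (drop ?k xs) = U - F" using disj t by auto
    have "take ?k xs \<in> {p \<in> permutations_of_set F. P p}"
      using t pq d by (auto simp: permutations_of_set_def)
    moreover have "drop ?k xs \<in> {q \<in> permutations_of_set (U - F). Q q}"
      using sd pq d by (auto simp: permutations_of_set_def)
    ultimately show "xs \<in> (\<lambda>(p,q). p @ q) ` ({p \<in> permutations_of_set F. P p} \<times> {q \<in> permutations_of_set (U - F). Q q})"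
      by (intro image_eqI[where x="(take ?k xs, drop ?k xs)"]) auto
  next
    fix xs assume "xs \<in> (\<lambda>(p,q). p @ q) ` ({p \<in> permutations_of_set F. P p} \<times> {q \<in> permutations_of_set (U - F). Q q})"
    then obtain p q where xs: "xs = p @ q" and p: "set p = F" "distinct p" "P p"
      and q: "set q = U - F" "distinct q" "Q q"
      by (auto simp: permutations_of_set_def)
    have lp: "length p = ?k" using p distinct_card by metis
    show "xs \<in> {xs \<in> permutations_of_set U. set (take ?k xs) = F \<and> P (take ?k xs) \<and> Q (drop ?k xs)}"
      using xs p q lp FU by (auto simp: permutations_of_set_def)
  qed
  have inj: "inj_on (\<lambda>(p,q). p @ q) ({p \<in> permutations_of_set F. P p} \<times> {q \<in> permutations_of_set (U - F). Q q})"
  proof (rule inj_onI, clarsimp)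
    fix p q p' q' assume "p \<in> permutations_of_set F" "p' \<in> permutations_of_set F" "p @ q = p' @ q'"
    moreover hence "length p = length p'" by (metis distinct_card permutations_of_setD)
    ultimately show "p = p' \<and> q = q'" by simp
  qed
  show ?thesis unfolding eq card_image[OF inj] card_cartesian_product ..
qed

lemma card_set_take: "distinct xs \<Longrightarrow> card (set (take i xs)) = min i (length xs)"
  by (simp add: distinct_card)

lemma per_chain:
  assumes d: "distinct xs" and finF: "finite Fam"
  shows "card {G\<in>Fam. set (take (card G) xs) = G} \<le>
    (\<Sum>F\<in>Fam. if set (take (card F) xs) = F \<and> (\<forall>i<card F. set (take i xs) \<notin> Fam)
       then 1 + card {G\<in>Fam. F \<subset> G \<and> set (take (card G) xs) = G} else 0)"
  (is "card ?H \<le> ?R")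
proof (cases "?H = {}")
  case True then show ?thesis by (simp only: card.empty zero_le)
next
  case False
  have finH: "finite ?H" using finF by simp
  define k0 where "k0 = Min (card ` ?H)"
  have "k0 \<in> card ` ?H" unfolding k0_def using False finH by (intro Min_in) auto
  then obtain F0 where F0: "F0 \<in> ?H" "card F0 = k0" by auto
  have kmin: "k0 \<le> card G" if "G \<in> ?H" for G
    unfolding k0_def using finH that by (intro Min_le) auto
  have k0len: "k0 \<le> length xs"
  proof -
    have "set (take k0 xs) = F0" using F0 by auto
    hence "k0 = min k0 (length xs)" using card_set_take[OF d, of k0] F0 by simp
    thus ?thesis by linarith
  qed
  have cond: "\<forall>i<card F0. set (take i xs) \<notin> Fam"
  proof (intro allI impI notI)
    fix i assume i: "i < card F0" and inF: "set (take i xs) \<in> Fam"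
    have ci: "card (set (take i xs)) = i" using card_set_take[OF d, of i] i F0 k0len by simp
    hence "set (take i xs) \<in> ?H" using inF by simp
    from kmin[OF this] ci i F0 show False by simp
  qed
  have sub: "?H \<subseteq> insert F0 {G\<in>Fam. F0 \<subset> G \<and> set (take (card G) xs) = G}"
  proof
    fix G assume G: "G \<in> ?H"
    show "G \<in> insert F0 {G\<in>Fam. F0 \<subset> G \<and> set (take (card G) xs) = G}"
    proof (cases "card G = k0")
      case True then show ?thesis using G F0 by auto
    next
      case False
      with kmin[OF G] have lt: "k0 < card G" by simp
      have "F0 \<subseteq> G" using F0 G set_take_subset_set_take[of k0 "card G" xs] lt by auto
      moreover have "F0 \<noteq> G" using lt F0 by auto
      ultimately show ?thesis using G by auto
    qed
  qed
  have "card ?H \<le> card (insert F0 {G\<in>Fam. F0 \<subset> G \<and> set (take (card G) xs) = G})"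
    by (rule card_mono) (use finF sub in auto)
  also have "\<dots> \<le> 1 + card {G\<in>Fam. F0 \<subset> G \<and> set (take (card G) xs) = G}"
    by (simp add: card_insert_if finF)
  also have "\<dots> = (if set (take (card F0) xs) = F0 \<and> (\<forall>i<card F0. set (take i xs) \<notin> Fam)
       then 1 + card {G\<in>Fam. F0 \<subset> G \<and> set (take (card G) xs) = G} else 0)"
    using F0 cond by simp
  also have "\<dots> \<le> ?R"
    by (rule member_le_sum[where f = "\<lambda>F. if set (take (card F) xs) = F \<and> (\<forall>i<card F. set (take i xs) \<notin> Fam)
       then 1 + card {G\<in>Fam. F \<subset> G \<and> set (take (card G) xs) = G} else 0"]) (use F0 finF in auto)
  finally show ?thesis .
qed

lemma card_filter_sum: "finite A \<Longrightarrow> card {x\<in>A. P x} = (\<Sum>x\<in>A. if P x then 1 else 0::nat)"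
  by (simp add: sum.If_cases Int_def)

lemma finite_perms: "finite U \<Longrightarrow> finite (permutations_of_set U)"
  using card_permutations_of_set[of U] by (metis card_ge_0_finite fact_gt_zero)

lemma cnt_take:
  assumes "finite U" "F \<subseteq> U"
  shows "card {xs \<in> permutations_of_set U. set (take (card F) xs) = F} = fact (card F) * fact (card U - card F)"
proof -
  have "card {xs \<in> permutations_of_set U. set (take (card F) xs) = F}
      = card {xs \<in> permutations_of_set U. set (take (card F) xs) = F \<and> (\<lambda>_. True) (take (card F) xs) \<and> (\<lambda>_. True) (drop (card F) xs)}"
    by simp
  also have "\<dots> = card {p \<in> permutations_of_set F. True} * card {q \<in> permutations_of_set (U - F). True}"
    by (rule split_perm[OF assms])
  also have "\<dots> = fact (card F) * fact (card U - card F)"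
    using assms by (simp add: card_Diff_subset finite_subset)
  finally show ?thesis .
qed

lemma chain_core:
  fixes Fam :: "'a set set" and \<delta> :: real
  assumes fin: "finite U" and FamU: "Fam \<subseteq> Pow U" and dpos: "\<delta> \<ge> 0"
  and hyp: "\<And>F. F \<in> Fam \<Longrightarrow> (\<Sum>G\<in>{G\<in>Fam. F \<subset> G}. fact (card G - card F) * fact (card U - card G) :: real)
                 \<le> \<delta> * fact (card U - card F)"
  shows "(\<Sum>F\<in>Fam. fact (card F) * fact (card U - card F) :: real) \<le> (1 + \<delta>) * fact (card U)"
proof -
  define P where "P = permutations_of_set U"
  define n where "n = card U"
  define E where "E F = {xs\<in>P. set (take (card F) xs) = F \<and> (\<forall>i<card F. set (take i xs) \<notin> Fam)}" for F
  define a where "a F = card {p\<in>permutations_of_set F. \<forall>i<card F. set (take i p) \<notin> Fam}" for F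
  have finFam: "finite Fam" using FamU fin by (meson finite_Pow_iff finite_subset)
  have finP: "finite P" unfolding P_def using fin by (rule finite_perms)
  have cardP: "card P = fact n" unfolding P_def n_def using fin by simp
  have FinU: "F \<subseteq> U" if "F \<in> Fam" for F using that FamU by auto
  have distP: "distinct xs" "set xs = U" if "xs \<in> P" for xs using that unfolding P_def permutations_of_set_def by auto

  have s1: "(\<Sum>xs\<in>P. card {G\<in>Fam. set (take (card G) xs) = G}) = (\<Sum>F\<in>Fam. fact (card F) * fact (n - card F))"
  proof -
    have "(\<Sum>xs\<in>P. card {G\<in>Fam. set (take (card G) xs) = G})
        = (\<Sum>xs\<in>P. \<Sum>G\<in>Fam. if set (take (card G) xs) = G then 1 else 0)"
      using finFam by (simp add: card_filter_sum)
    also have "\<dots> = (\<Sum>G\<in>Fam. \<Sum>xs\<in>P. if set (take (card G) xs) = G then 1 else 0)"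
      by (rule sum.swap)
    also have "\<dots> = (\<Sum>G\<in>Fam. card {xs\<in>P. set (take (card G) xs) = G})"
      using finP by (simp add: card_filter_sum)
    also have "\<dots> = (\<Sum>F\<in>Fam. fact (card F) * fact (n - card F))"
      unfolding P_def n_def using cnt_take[OF fin] FinU by (intro sum.cong) auto
    finally show ?thesis .
  qed

  have cE: "card (E F) = a F * fact (n - card F)" if F: "F \<in> Fam" for F
  proof -
    have "E F = {xs \<in> permutations_of_set U. set (take (card F) xs) = F \<and>
             (\<lambda>p. \<forall>i<card F. set (take i p) \<notin> Fam) (take (card F) xs) \<and> (\<lambda>_. True) (drop (card F) xs)}"
      unfolding E_def P_def by (auto simp: min_def)
    also have "card \<dots> = a F * card {q \<in> permutations_of_set (U - F). True}"
      unfolding a_def by (rule split_perm[OF fin FinU[OF F]])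
    finally show ?thesis using fin FinU[OF F] by (simp add: n_def card_Diff_subset finite_subset)
  qed

  have cEG: "card {xs\<in>E F. set (take (card G) xs) = G} = a F * (fact (card G - card F) * fact (n - card G))"
    if F: "F \<in> Fam" and G: "G \<in> Fam" and FG: "F \<subset> G" for F G
  proof -
    let ?k = "card F"
    have GU: "G \<subseteq> U" using G FinU by auto
    have finG: "finite G" using GU fin finite_subset by auto
    have kG: "?k < card G" using FG finG psubset_card_mono by auto
    have key: "set (take (card G) xs) = G \<longleftrightarrow> set (take (card G - ?k) (drop ?k xs)) = G - F"
      if xs: "xs \<in> P" "set (take ?k xs) = F" for xs
    proof -
      have "take (card G) xs = take ?k xs @ take (card G - ?k) (drop ?k xs)"
        using kG by (metis le_add_diff_inverse less_imp_le take_add)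
      hence st: "set (take (card G) xs) = F \<union> set (take (card G - ?k) (drop ?k xs))"
        using xs by simp
      have "set (take (card G - ?k) (drop ?k xs)) \<subseteq> set (drop ?k xs)" by (rule set_take_subset)
      moreover have "set (take ?k xs) \<inter> set (drop ?k xs) = {}"
        using set_take_disj_set_drop_if_distinct[OF distP(1)[OF xs(1)]] by auto
      ultimately have "F \<inter> set (take (card G - ?k) (drop ?k xs)) = {}" using xs by auto
      thus ?thesis unfolding st using FG by auto
    qed
    have "{xs\<in>E F. set (take (card G) xs) = G} = {xs \<in> permutations_of_set U. set (take ?k xs) = F \<and>
             (\<lambda>p. \<forall>i<?k. set (take i p) \<notin> Fam) (take ?k xs) \<and>
             (\<lambda>q. set (take (card (G - F)) q) = G - F) (drop ?k xs)}"
    proof -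
      have cGF: "card (G - F) = card G - ?k" using FG finG by (meson card_Diff_subset finite_subset psubset_imp_subset)
      show ?thesis unfolding E_def cGF using key unfolding P_def by (auto simp: min_def)
    qed
    also have "card \<dots> = a F * card {q \<in> permutations_of_set (U - F). set (take (card (G - F)) q) = G - F}"
      unfolding a_def by (rule split_perm[OF fin FinU[OF F]])
    also have "card {q \<in> permutations_of_set (U - F). set (take (card (G - F)) q) = G - F}
         = fact (card (G - F)) * fact (card (U - F) - card (G - F))"
      by (rule cnt_take) (use fin GU in auto)
    also have "card (G - F) = card G - ?k" using FG finG by (meson card_Diff_subset finite_subset psubset_imp_subset)
    also have "card (U - F) - (card G - ?k) = n - card G"
      using FinU[OF F] fin kG GU card_mono[OF fin GU] unfolding n_def
      by (simp add: card_Diff_subset finite_subset)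
    finally show ?thesis .
  qed

  have s2: "(\<Sum>xs\<in>P. card {G\<in>Fam. set (take (card G) xs) = G}) \<le>
     (\<Sum>F\<in>Fam. card (E F) + (\<Sum>G\<in>{G\<in>Fam. F \<subset> G}. card {xs\<in>E F. set (take (card G) xs) = G}))"
  proof -
    have "(\<Sum>xs\<in>P. card {G\<in>Fam. set (take (card G) xs) = G}) \<le>
      (\<Sum>xs\<in>P. \<Sum>F\<in>Fam. if set (take (card F) xs) = F \<and> (\<forall>i<card F. set (take i xs) \<notin> Fam)
       then 1 + card {G\<in>Fam. F \<subset> G \<and> set (take (card G) xs) = G} else 0)"
      by (intro sum_mono per_chain[OF _ finFam]) (use distP in auto)
    also have "\<dots> = (\<Sum>F\<in>Fam. \<Sum>xs\<in>P. if set (take (card F) xs) = F \<and> (\<forall>i<card F. set (take i xs) \<notin> Fam)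
       then 1 + card {G\<in>Fam. F \<subset> G \<and> set (take (card G) xs) = G} else 0)"
      by (rule sum.swap)
    also have "\<dots> = (\<Sum>F\<in>Fam. card (E F) + (\<Sum>G\<in>{G\<in>Fam. F \<subset> G}. card {xs\<in>E F. set (take (card G) xs) = G}))"
    proof (rule sum.cong[OF refl])
      fix F assume F: "F \<in> Fam"
      have finE: "finite (E F)" unfolding E_def using finP by simp
      have "(\<Sum>xs\<in>P. if set (take (card F) xs) = F \<and> (\<forall>i<card F. set (take i xs) \<notin> Fam)
       then 1 + card {G\<in>Fam. F \<subset> G \<and> set (take (card G) xs) = G} else 0)
        = (\<Sum>xs\<in>E F. 1 + card {G\<in>Fam. F \<subset> G \<and> set (take (card G) xs) = G})"
        unfolding E_def sum.inter_filter[OF finP] by (rule refl)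
      also have "\<dots> = card (E F) + (\<Sum>xs\<in>E F. \<Sum>G\<in>{G\<in>Fam. F \<subset> G}. if set (take (card G) xs) = G then 1 else 0)"
      proof -
        have "card {G\<in>Fam. F \<subset> G \<and> set (take (card G) xs) = G} = (\<Sum>G\<in>{G\<in>Fam. F \<subset> G}. if set (take (card G) xs) = G then 1 else 0)" for xs
        proof -
          have "{G\<in>Fam. F \<subset> G \<and> set (take (card G) xs) = G} = {G\<in>{G\<in>Fam. F \<subset> G}. set (take (card G) xs) = G}" by auto
          moreover have fin2: "finite {G\<in>Fam. F \<subset> G}" using finFam by simp
          ultimately show ?thesis by (simp only: card_filter_sum[OF fin2])
        qed
        thus ?thesis by (simp only: sum.distrib) simp
      qed
      also have "(\<Sum>xs\<in>E F. \<Sum>G\<in>{G\<in>Fam. F \<subset> G}. if set (take (card G) xs) = G then 1 else 0)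
          = (\<Sum>G\<in>{G\<in>Fam. F \<subset> G}. card {xs\<in>E F. set (take (card G) xs) = G})"
        by (subst sum.swap) (simp add: card_filter_sum[OF finE])
      finally show "(\<Sum>xs\<in>P. if set (take (card F) xs) = F \<and> (\<forall>i<card F. set (take i xs) \<notin> Fam)
       then 1 + card {G\<in>Fam. F \<subset> G \<and> set (take (card G) xs) = G} else 0)
        = card (E F) + (\<Sum>G\<in>{G\<in>Fam. F \<subset> G}. card {xs\<in>E F. set (take (card G) xs) = G})" .
    qed
    finally show ?thesis .
  qed

  have sE: "(\<Sum>F\<in>Fam. card (E F)) \<le> fact n"
  proof -
    have disj: "E F \<inter> E F' = {}" if "F \<in> Fam" "F' \<in> Fam" "F \<noteq> F'" for F F'
    proof (rule ccontr)
      assume "E F \<inter> E F' \<noteq> {}"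
      then obtain xs where x1: "set (take (card F) xs) = F" "\<forall>i<card F. set (take i xs) \<notin> Fam"
        and x2: "set (take (card F') xs) = F'" "\<forall>i<card F'. set (take i xs) \<notin> Fam"
        unfolding E_def by blast
      consider "card F < card F'" | "card F' < card F" | "card F = card F'" by linarith
      thus False
      proof cases
        case 1 thus False using x1(1) x2(2) that(1) by auto
      next
        case 2 thus False using x2(1) x1(2) that(2) by auto
      next
        case 3 thus False using x1(1) x2(1) that(3) by simp
      qed
    qed
    have "(\<Sum>F\<in>Fam. card (E F)) = card (\<Union>F\<in>Fam. E F)"
      by (rule card_UN_disjoint[symmetric]) (use finFam finP disj in \<open>auto simp: E_def\<close>)
    also have "\<dots> \<le> card P" by (rule card_mono[OF finP]) (auto simp: E_def)
    finally show ?thesis using cardP by simp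
  qed

  have "(\<Sum>F\<in>Fam. fact (card F) * fact (card U - card F) :: real)
       = real (\<Sum>F\<in>Fam. fact (card F) * fact (n - card F))"
    unfolding n_def by (simp add: of_nat_sum)
  also have "\<dots> \<le> real (\<Sum>F\<in>Fam. card (E F) + (\<Sum>G\<in>{G\<in>Fam. F \<subset> G}. card {xs\<in>E F. set (take (card G) xs) = G}))"
    by (subst of_nat_le_iff) (use s1 s2 in linarith)
  also have "\<dots> = (\<Sum>F\<in>Fam. real (a F) * (fact (n - card F) +
       (\<Sum>G\<in>{G\<in>Fam. F \<subset> G}. fact (card G - card F) * fact (n - card G))))"
    unfolding of_nat_sum
  proof (rule sum.cong[OF refl])
    fix F assume F: "F \<in> Fam"
    have "(\<Sum>G\<in>{G\<in>Fam. F \<subset> G}. real (card {xs\<in>E F. set (take (card G) xs) = G}))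
      = (\<Sum>G\<in>{G\<in>Fam. F \<subset> G}. real (a F) * (fact (card G - card F) * fact (n - card G)))"
      by (intro sum.cong refl) (simp add: cEG[OF F])
    thus "real (card (E F) + (\<Sum>G\<in>{G\<in>Fam. F \<subset> G}. card {xs\<in>E F. set (take (card G) xs) = G}))
       = real (a F) * (fact (n - card F) + (\<Sum>G\<in>{G\<in>Fam. F \<subset> G}. fact (card G - card F) * fact (n - card G)))"
    proof -
      have "real (card (E F) + (\<Sum>G\<in>{G\<in>Fam. F \<subset> G}. card {xs\<in>E F. set (take (card G) xs) = G}))
          = real (card (E F)) + (\<Sum>G\<in>{G\<in>Fam. F \<subset> G}. real (card {xs\<in>E F. set (take (card G) xs) = G}))"
        by (simp only: of_nat_add of_nat_sum)
      also have "real (card (E F)) = real (a F) * fact (n - card F)"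
        by (simp only: cE[OF F] of_nat_mult of_nat_fact)
      finally show ?thesis unfolding \<open>(\<Sum>G\<in>{G\<in>Fam. F \<subset> G}. real (card {xs\<in>E F. set (take (card G) xs) = G})) = _\<close>
        by (simp only: sum_distrib_left[symmetric] distrib_left)
    qed
  qed
  also have "\<dots> \<le> (\<Sum>F\<in>Fam. real (a F) * ((1 + \<delta>) * fact (n - card F)))"
  proof (rule sum_mono)
    fix F assume F: "F \<in> Fam"
    have "fact (n - card F) + (\<Sum>G\<in>{G\<in>Fam. F \<subset> G}. fact (card G - card F) * fact (n - card G)) \<le> (1 + \<delta>) * (fact (n - card F) :: real)"
      using hyp[OF F] unfolding n_def by (simp add: algebra_simps)
    thus "real (a F) * (fact (n - card F) + (\<Sum>G\<in>{G\<in>Fam. F \<subset> G}. fact (card G - card F) * fact (n - card G)))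
       \<le> real (a F) * ((1 + \<delta>) * fact (n - card F))"
      by (intro mult_left_mono) auto
  qed
  also have "\<dots> = (1 + \<delta>) * real (\<Sum>F\<in>Fam. card (E F))"
  proof -
    have "(\<Sum>F\<in>Fam. real (a F) * ((1 + \<delta>) * fact (n - card F))) = (\<Sum>F\<in>Fam. (1 + \<delta>) * real (card (E F)))"
      by (intro sum.cong refl) (simp only: cE of_nat_mult of_nat_fact mult_ac)
    thus ?thesis by (simp only: of_nat_sum sum_distrib_left)
  qed
  also have "\<dots> \<le> (1 + \<delta>) * fact (card U)"
  proof -
    have "real (\<Sum>F\<in>Fam. card (E F)) \<le> real (fact n)" using sE by (simp only: of_nat_le_iff)
    hence "real (\<Sum>F\<in>Fam. card (E F)) \<le> fact (card U)" unfolding n_def by (simp only: of_nat_fact)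
    thus ?thesis using dpos by (intro mult_left_mono) auto
  qed
  finally show ?thesis .
qed

lemma fact_mid_le:
  assumes "3 \<le> j" "2 * j \<le> m"
  shows "fact j * fact (m - j) \<le> (6::nat) * fact (m - 3)"
proof -
  have jm: "j \<le> m" "3 \<le> m" using assms by auto
  have e1: "fact j * fact (m - j) * (m choose j) = fact m" by (rule binomial_fact_lemma[OF jm(1)])
  have e2: "fact 3 * fact (m - 3) * (m choose 3) = fact m" by (rule binomial_fact_lemma[OF jm(2)])
  have le: "m choose 3 \<le> m choose j" by (rule binomial_mono) (use assms in auto)
  have pos: "m choose 3 > 0" using jm by simp
  have "fact j * fact (m - j) * (m choose 3) \<le> fact j * fact (m - j) * (m choose j)"
    using le by simp
  also have "\<dots> = fact 3 * fact (m - 3) * (m choose 3)" using e1 e2 by simp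
  finally have "fact j * fact (m - j) \<le> (fact 3 * fact (m - 3) :: nat)" using pos by simp
  thus ?thesis by (simp add: fact_numeral)
qed

lemma sum_bound:
  fixes N :: "nat \<Rightarrow> nat" and m n :: nat and t \<epsilon> :: real
  assumes ep: "\<epsilon> > 0" and N1: "real (N 1) \<le> \<epsilon> * n" and N2: "\<And>j. j \<ge> 2 \<Longrightarrow> real (N j) \<le> \<epsilon> * real n ^ 2"
    and N0: "\<And>j. real j > 2 * t \<Longrightarrow> N j = 0"
    and tn: "t \<le> real n / 200" and t0: "t \<ge> 0" and mn: "real m \<ge> (49/100) * real n + 2" and n400: "n \<ge> 400"
  shows "(\<Sum>j=1..m. real (N j) * fact j * fact (m - j)) \<le> 15 * \<epsilon> * fact m"
proof -
  have nn: "real n \<ge> 400" using n400 by simp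
  have "real m \<ge> 3" using mn nn by linarith
  hence m3: "m \<ge> 3" by simp
  have fm: "(fact m :: real) = real m * fact (m - 1)" using m3 by (simp add: fact_reduce)
  have fm1: "(fact (m - 1) :: real) = (real m - 1) * fact (m - 2)"
    using m3 fact_reduce[of "m - 1", where 'a=real] by (simp add: of_nat_diff numeral_2_eq_2 diff_diff_add)
  have fm2: "(fact (m - 2) :: real) = (real m - 2) * fact (m - 3)"
    using m3 fact_reduce[of "m - 2", where 'a=real] by (simp add: of_nat_diff numeral_3_eq_3 diff_diff_add)
  have a: "real m - 2 \<ge> (49/100) * real n" using mn by simp
  define c where "c = (fact (m - 3) :: real)"
  have c0: "c > 0" unfolding c_def by simp
  have FM: "(fact m :: real) = real m * (real m - 1) * (real m - 2) * c"
    unfolding c_def fm fm1 fm2 by simp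
  have F1: "(fact (m - 1) :: real) = (real m - 1) * (real m - 2) * c" unfolding c_def fm1 fm2 by simp
  have F2: "(fact (m - 2) :: real) = (real m - 2) * c" unfolding c_def fm2 by simp
  have t1: "real (N 1) * fact 1 * fact (m - 1) \<le> 3 * \<epsilon> * fact m"
  proof -
    have "real (N 1) * fact 1 * fact (m - 1) \<le> (\<epsilon> * n) * fact (m - 1)"
      using N1 by (intro mult_right_mono) auto
    also have "\<dots> \<le> (3 * \<epsilon> * m) * fact (m - 1)"
      using mn ep by (intro mult_right_mono) auto
    finally show ?thesis using fm by simp
  qed
  have t2: "real (N 2) * fact 2 * fact (m - 2) \<le> 9 * \<epsilon> * fact m"
  proof -
    have "real (N 2) * fact 2 * fact (m - 2) \<le> (\<epsilon> * real n ^ 2) * 2 * fact (m - 2)"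
      using N2[of 2] by (intro mult_right_mono) (auto simp: fact_numeral)
    also have "\<dots> = (2 * real n ^ 2) * (\<epsilon> * ((real m - 2) * c))" unfolding F2 by simp
    also have "\<dots> \<le> (9 * real m * (real m - 1)) * (\<epsilon> * ((real m - 2) * c))"
    proof (rule mult_right_mono)
      have "2 * real n ^ 2 = 2 * (real n * real n)" by (simp add: power2_eq_square)
      also have "\<dots> \<le> 9 * (((49/100) * real n) * ((49/100) * real n))" using nn by simp
      also have "\<dots> \<le> 9 * (real m * (real m - 1))"
        using a nn by (intro mult_left_mono mult_mono) auto
      finally show "2 * real n ^ 2 \<le> 9 * real m * (real m - 1)" by simp
      show "0 \<le> \<epsilon> * ((real m - 2) * c)" using ep a nn c0 by simp
    qed
    also have "\<dots> = 9 * \<epsilon> * fact m" unfolding FM by (simp add: algebra_simps)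
    finally show ?thesis .
  qed
  define K where "K = {j\<in>{3..m}. real j \<le> 2 * t}"
  have t3: "(\<Sum>j=3..m. real (N j) * fact j * fact (m - j)) \<le> 3 * \<epsilon> * fact m"
  proof -
    have "(\<Sum>j=3..m. real (N j) * fact j * fact (m - j)) \<le> (\<Sum>j=3..m. if real j \<le> 2 * t then \<epsilon> * real n ^ 2 * (6 * c) else 0)"
    proof (rule sum_mono)
      fix j assume j: "j \<in> {3..m}"
      show "real (N j) * fact j * fact (m - j) \<le> (if real j \<le> 2 * t then \<epsilon> * real n ^ 2 * (6 * c) else 0)"
      proof (cases "real j \<le> 2 * t")
        case True
        have "2 * j \<le> m" using True tn a nn by linarith
        hence "fact j * fact (m - j) \<le> (6::nat) * fact (m - 3)" using j by (intro fact_mid_le) auto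
        hence fj: "(fact j * fact (m - j) :: real) \<le> 6 * c" unfolding c_def
          by (metis (mono_tags, lifting) of_nat_fact of_nat_le_iff of_nat_mult of_nat_numeral)
        have nj: "real (N j) \<le> \<epsilon> * real n ^ 2" using N2 j by auto
        have "real (N j) * (fact j * fact (m - j)) \<le> \<epsilon> * real n ^ 2 * (6 * c)"
          by (rule mult_mono[OF nj fj]) (use ep in auto)
        thus ?thesis using True by (simp add: mult.assoc)
      next
        case False thus ?thesis using N0[of j] by simp
      qed
    qed
    also have "\<dots> = real (card K) * (\<epsilon> * real n ^ 2 * (6 * c))"
      unfolding K_def by (simp add: sum.If_cases Int_def)
    also have "\<dots> \<le> (2 * t) * (\<epsilon> * real n ^ 2 * (6 * c))"
    proof (rule mult_right_mono)
      have "K \<subseteq> {1..nat \<lfloor>2 * t\<rfloor>}" unfolding K_def by (auto simp: le_nat_floor)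
      hence "card K \<le> nat \<lfloor>2 * t\<rfloor>" by (metis card_atLeastAtMost card_mono diff_Suc_1 finite_atLeastAtMost)
      hence "real (card K) \<le> real (nat \<lfloor>2 * t\<rfloor>)" by simp
      also have "\<dots> = of_int \<lfloor>2 * t\<rfloor>" using t0 by simp
      also have "\<dots> \<le> 2 * t" by (rule of_int_floor_le)
      finally show "real (card K) \<le> 2 * t" .
      show "0 \<le> \<epsilon> * real n ^ 2 * (6 * c)" using ep c0 by simp
    qed
    also have "\<dots> = (12 * t * real n ^ 2) * (\<epsilon> * c)" by (simp add: algebra_simps)
    also have "\<dots> \<le> (3 * (real m * (real m - 1) * (real m - 2))) * (\<epsilon> * c)"
    proof (rule mult_right_mono)
      have "12 * t * real n ^ 2 \<le> 12 * (real n / 200) * real n ^ 2"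
        using tn by (intro mult_right_mono mult_left_mono) auto
      also have "\<dots> \<le> 3 * (((49/100) * real n) * ((49/100) * real n) * ((49/100) * real n))"
        using nn by (simp add: power2_eq_square)
      also have "\<dots> \<le> 3 * (real m * (real m - 1) * (real m - 2))"
        using a nn by (intro mult_left_mono mult_mono) auto
      finally show "12 * t * real n ^ 2 \<le> 3 * (real m * (real m - 1) * (real m - 2))" .
      show "0 \<le> \<epsilon> * c" using ep c0 by simp
    qed
    also have "\<dots> = 3 * \<epsilon> * fact m" unfolding FM by (simp add: algebra_simps)
    finally show ?thesis .
  qed
  have split: "(\<Sum>j=1..m. real (N j) * fact j * fact (m - j)) =
      real (N 1) * fact 1 * fact (m - 1) + (real (N 2) * fact 2 * fact (m - 2) + (\<Sum>j=3..m. real (N j) * fact j * fact (m - j)))"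
    using m3 by (simp add: sum.atLeast_Suc_atMost numeral_3_eq_3 numeral_2_eq_2)
  show ?thesis unfolding split using t1 t2 t3 by linarith
qed

lemma regroup:
  assumes fin: "finite U" and FamU: "Fam \<subseteq> Pow U" and F: "F \<in> Fam"
  shows "(\<Sum>G\<in>{G\<in>Fam. F \<subset> G}. fact (card G - card F) * fact (card U - card G) :: real)
       = (\<Sum>j=1..card U - card F. real (nabla j Fam F) * fact j * fact ((card U - card F) - j))"
proof -
  let ?S = "{G\<in>Fam. F \<subset> G}" and ?k = "card F" and ?m = "card U - card F"
  let ?h = "\<lambda>G. fact (card G - card F) * fact (card U - card G) :: real"
  have finFam: "finite Fam" using FamU fin by (meson finite_Pow_iff finite_subset)
  have img: "(\<lambda>G. card G - ?k) ` ?S \<subseteq> {1..?m}"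
  proof
    fix x assume "x \<in> (\<lambda>G. card G - ?k) ` ?S"
    then obtain G where G: "G \<in> Fam" "F \<subset> G" "x = card G - ?k" by auto
    have GU: "G \<subseteq> U" using G FamU by auto
    have "?k < card G" using G GU fin by (meson finite_subset psubset_card_mono)
    moreover have "card G \<le> card U" by (rule card_mono[OF fin GU])
    ultimately show "x \<in> {1..?m}" using G by auto
  qed
  have "(\<Sum>G\<in>?S. ?h G) = (\<Sum>j\<in>{1..?m}. \<Sum>G\<in>{G\<in>?S. card G - ?k = j}. ?h G)"
    by (rule sum.group[symmetric]) (use finFam img in auto)
  also have "\<dots> = (\<Sum>j=1..?m. real (nabla j Fam F) * fact j * fact (?m - j))"
  proof (rule sum.cong[OF refl])
    fix j assume j: "j \<in> {1..?m}"
    have eq: "{G\<in>?S. card G - ?k = j} = {G \<in> Fam. F \<subseteq> G \<and> card G = card F + j}"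
      using j by auto
    have "(\<Sum>G\<in>{G\<in>?S. card G - ?k = j}. ?h G) = (\<Sum>G\<in>{G \<in> Fam. F \<subseteq> G \<and> card G = card F + j}. fact j * fact (?m - j))"
      unfolding eq by (intro sum.cong refl) (auto simp: diff_diff_add)
    also have "\<dots> = real (nabla j Fam F) * fact j * fact (?m - j)"
      unfolding nabla_def by simp
    finally show "(\<Sum>G\<in>{G\<in>?S. card G - ?k = j}. ?h G) = real (nabla j Fam F) * fact j * fact (?m - j)" .
  qed
  finally show ?thesis .
qed

lemma powr_small:
  fixes n :: nat assumes "n \<ge> 8000000"
  shows "real n powr (2/3) \<le> real n / 200"
proof -
  have n0: "real n > 0" using assms by simp
  have "(200::real) = (200 powr 3) powr (1/3)" by (simp add: powr_powr)
  also have "\<dots> = real (8000000::nat) powr (1/3)" by (simp add: powr_realpow)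
  also have "\<dots> \<le> real n powr (1/3)" using assms by (intro powr_mono2) auto
  finally have c: "200 \<le> real n powr (1/3)" .
  have "real n = real n powr (2/3) * real n powr (1/3)"
    using n0 by (simp add: powr_add[symmetric])
  hence "real n powr (2/3) * 200 \<le> real n"
    using c by (metis mult_left_mono powr_ge_zero)
  thus ?thesis by simp
qed

theorem lemma2p4:
  fixes \<epsilon> :: real
  assumes "\<epsilon> > 0"
  shows "\<exists>n0::nat. \<forall>n\<ge>n0. \<forall>\<F> :: nat set set.
    \<F> \<subseteq> Pow {1..n} \<longrightarrow>
    (\<forall>F\<in>\<F>. real n / 2 - real n powr (2/3) \<le> real (card F) \<and>
              real (card F) \<le> real n / 2 + real n powr (2/3)) \<longrightarrow>
    (\<forall>F\<in>\<F>. real (nabla 1 \<F> F) \<le> \<epsilon> * real n \<and>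
              (\<forall>j\<ge>2. real (nabla j \<F> F) \<le> \<epsilon> * real n ^ 2)) \<longrightarrow>
    real (card \<F>) \<le> (1 + 15 * \<epsilon>) * real (n choose (n div 2))"
proof (intro exI[of _ 8000000] allI impI)
  fix n :: nat and Fam :: "nat set set"
  assume n: "8000000 \<le> n" and FamU: "Fam \<subseteq> Pow {1..n}"
    and band: "\<forall>F\<in>Fam. real n / 2 - real n powr (2/3) \<le> real (card F) \<and>
              real (card F) \<le> real n / 2 + real n powr (2/3)"
    and nab: "\<forall>F\<in>Fam. real (nabla 1 Fam F) \<le> \<epsilon> * real n \<and>
              (\<forall>j\<ge>2. real (nabla j Fam F) \<le> \<epsilon> * real n ^ 2)"
  define U where "U = {1..n}"
  define t where "t = real n powr (2/3)"
  have finU: "finite U" and cU: "card U = n" unfolding U_def by auto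
  have tn: "t \<le> real n / 200" unfolding t_def using powr_small[OF n] .
  have t0: "t \<ge> 0" unfolding t_def by simp
  have nn: "real n \<ge> 8000000" using n by simp
  have finFam: "finite Fam" using FamU by (meson finite_Pow_iff finite_atLeastAtMost finite_subset)
  have kle: "card F \<le> n" if "F \<in> Fam" for F
    using that FamU card_mono[OF finU, of F] unfolding U_def cU by auto
  have hyp: "(\<Sum>G\<in>{G\<in>Fam. F \<subset> G}. fact (card G - card F) * fact (card U - card G) :: real)
                 \<le> (15 * \<epsilon>) * fact (card U - card F)" if F: "F \<in> Fam" for F
  proof -
    have "(\<Sum>G\<in>{G\<in>Fam. F \<subset> G}. fact (card G - card F) * fact (card U - card G) :: real)
       = (\<Sum>j=1..n - card F. real (nabla j Fam F) * fact j * fact ((n - card F) - j))"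
      using regroup[OF finU _ F] FamU unfolding U_def cU[unfolded U_def] by simp
    also have "\<dots> \<le> 15 * \<epsilon> * fact (n - card F)"
    proof (rule sum_bound[where t = t])
      show "\<epsilon> > 0" by fact
      show "real (nabla 1 Fam F) \<le> \<epsilon> * real n" using nab F by auto
      show "\<And>j. 2 \<le> j \<Longrightarrow> real (nabla j Fam F) \<le> \<epsilon> * real n ^ 2" using nab F by auto
      show "t \<le> real n / 200" by fact
      show "t \<ge> 0" by fact
      show "400 \<le> n" using n by simp
      show "(49/100) * real n + 2 \<le> real (n - card F)"
      proof -
        have "real (card F) \<le> real n / 2 + t" using band F t_def by auto
        thus ?thesis using tn nn kle[OF F] by (simp add: of_nat_diff)
      qed
      show "nabla j Fam F = 0" if j: "2 * t < real j" for j
      proof -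
        have "{G \<in> Fam. F \<subseteq> G \<and> card G = card F + j} = {}"
        proof (intro equalityI subsetI)
          fix G assume "G \<in> {G \<in> Fam. F \<subseteq> G \<and> card G = card F + j}"
          hence G: "G \<in> Fam" "card G = card F + j" by auto
          have "real (card G) \<le> real n / 2 + t" using band G t_def by auto
          moreover have "real n / 2 - t \<le> real (card F)" using band F t_def by auto
          ultimately show "G \<in> {}" using G j by simp
        qed auto
        thus ?thesis unfolding nabla_def by (simp only: card.empty)
      qed
    qed
    finally show ?thesis unfolding cU by simp
  qed
  have core: "(\<Sum>F\<in>Fam. fact (card F) * fact (card U - card F) :: real) \<le> (1 + 15 * \<epsilon>) * fact (card U)"
    by (rule chain_core[OF finU _ _ hyp]) (use FamU \<open>\<epsilon> > 0\<close> in \<open>auto simp: U_def\<close>)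
  define B where "B = real (n choose (n div 2))"
  have B0: "B > 0" unfolding B_def by simp
  have tmb: "fact n / B \<le> (fact (card F) * fact (n - card F) :: real)" if F: "F \<in> Fam" for F
  proof -
    have e: "fact (card F) * fact (n - card F) * real (n choose card F) = fact n"
      using binomial_fact_lemma[OF kle[OF F]] by (metis of_nat_fact of_nat_mult)
    have cpos: "real (n choose card F) > 0" using kle[OF F] by simp
    have cB: "real (n choose card F) \<le> B" unfolding B_def using binomial_maximum by simp
    have "fact n / B \<le> fact n / real (n choose card F)"
      using cpos cB B0 by (intro divide_left_mono) auto
    also have "\<dots> = fact (card F) * fact (n - card F)" using e cpos by (simp add: field_simps)
    finally show ?thesis .
  qed
  have "real (card Fam) * (fact n / B) = (\<Sum>F\<in>Fam. fact n / B)" by simp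
  also have "\<dots> \<le> (\<Sum>F\<in>Fam. fact (card F) * fact (n - card F))" by (rule sum_mono) (rule tmb)
  also have "\<dots> \<le> (1 + 15 * \<epsilon>) * fact n" using core unfolding cU .
  finally have "real (card Fam) * (fact n / B) \<le> (1 + 15 * \<epsilon>) * fact n" .
  hence "real (card Fam) * fact n \<le> ((1 + 15 * \<epsilon>) * B) * fact n"
    using B0 by (simp add: field_simps)
  hence "real (card Fam) \<le> (1 + 15 * \<epsilon>) * B"
    by (rule mult_right_le_imp_le) simp
  thus "real (card Fam) \<le> (1 + 15 * \<epsilon>) * real (n choose (n div 2))" unfolding B_def .
qed

end
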